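(* Let $P$ be a finite set of points in the plane in general position (no three collinear) with $|P|$ even. Then $P$ has at most one pairwise crossing perfect matching.
   Context: A perfect matching on $P$ is a partition of $P$ into pairs, each pair $\{a,b\}$ regarded as the straight-line segment $ab$. A perfect matching is pairwise crossing if every two of its segments cross each other. *)

theory Defs
  imports "HOL-Analysis.Analysis"
begin

definition general_position :: "(real^2) set \<Rightarrow> bool" where
  "general_position P \<longleftrightarrow>
     (\<forall>a\<in>P. \<forall>b\<in>P. \<forall>c\<in>P. a \<noteq> b \<and> a \<noteq> c \<and> b \<noteq> c \<longrightarrow> \<not> collinear {a, b, c})"

definition perfect_matching :: "(real^2) set \<Rightarrow> (real^2) set set \<Rightarrow> bool" where
  "perfect_matching P M \<longleftrightarrow>
     (\<forall>e\<in>M. \<exists>a b. a \<noteq> b \<and> e = {a, b}) \<and>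
     \<Union>M = P \<and>
     (\<forall>e\<in>M. \<forall>e'\<in>M. e \<noteq> e' \<longrightarrow> e \<inter> e' = {})"

definition segments_cross :: "(real^2) set \<Rightarrow> (real^2) set \<Rightarrow> bool" where
  "segments_cross e e' \<longleftrightarrow> convex hull e \<inter> convex hull e' \<noteq> {}"

definition pairwise_crossing :: "(real^2) set set \<Rightarrow> bool" where
  "pairwise_crossing M \<longleftrightarrow> (\<forall>e\<in>M. \<forall>e'\<in>M. e \<noteq> e' \<longrightarrow> segments_cross e e')"

end

theory Submission imports Defs begin

definition cr :: "real^2 \<Rightarrow> real^2 \<Rightarrow> real^2 \<Rightarrow> real" where
  "cr v w q = (w$1 - v$1)*(q$2 - v$2) - (w$2 - v$2)*(q$1 - v$1)"

lemma vec2_eq: "(x::real^2) = y \<longleftrightarrow> x$1 = y$1 \<and> x$2 = y$2"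
  by (metis (full_types) exhaust_2 vec_eq_iff)

lemma cr_zero_collinear:
  assumes "cr a b c = 0" "a \<noteq> b"
  shows "collinear {a,b,c}"
proof -
  obtain k where k: "c - a = k *\<^sub>R (b - a)"
  proof (cases "b$1 = a$1")
    case True
    then have ne: "b$2 - a$2 \<noteq> 0" using assms(2) vec2_eq by auto
    define k where "k = (c$2 - a$2)/(b$2 - a$2)"
    have c2: "c$2 - a$2 = k * (b$2 - a$2)" unfolding k_def using ne by simp
    have "(b$2 - a$2) * (c$1 - a$1) = 0" using assms(1) True unfolding cr_def by simp
    then have c1: "c$1 - a$1 = k * (b$1 - a$1)" using ne True by simp
    have "c - a = k *\<^sub>R (b - a)" unfolding vec2_eq using c1 c2 by simp
    then show ?thesis using that by blast
  next
    case False
    then have ne: "b$1 - a$1 \<noteq> 0" by simp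
    define k where "k = (c$1 - a$1)/(b$1 - a$1)"
    have c1: "c$1 - a$1 = k * (b$1 - a$1)" unfolding k_def using ne by simp
    have "(b$1 - a$1) * (c$2 - a$2) = (b$2 - a$2) * (c$1 - a$1)" using assms(1) unfolding cr_def by simp
    then have "(b$1 - a$1) * (c$2 - a$2) = (b$1 - a$1) * (k * (b$2 - a$2))" using c1 by (simp add: algebra_simps)
    then have c2: "c$2 - a$2 = k * (b$2 - a$2)" using ne by simp
    have "c - a = k *\<^sub>R (b - a)" unfolding vec2_eq using c1 c2 by simp
    then show ?thesis using that by blast
  qed
  have e: "c = a + k *\<^sub>R (b - a)" using k by (simp add: algebra_simps)
  show ?thesis unfolding collinear_def
  proof (intro exI[of _ "b - a"] ballI)
    fix x y assume "x \<in> {a,b,c}" "y \<in> {a,b,c}"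
    have gen: "\<exists>s. z = a + s *\<^sub>R (b - a)" if "z \<in> {a,b,c}" for z
    proof -
      from that have "z = a \<or> z = b \<or> z = c" by blast
      then show ?thesis
      proof (elim disjE)
        assume "z = a" then show ?thesis by (intro exI[of _ 0]) simp
      next
        assume "z = b" then show ?thesis by (intro exI[of _ 1]) simp
      next
        assume "z = c" then show ?thesis using e by blast
      qed
    qed
    obtain s t where xs: "x = a + s *\<^sub>R (b - a)" "y = a + t *\<^sub>R (b - a)"
      using gen \<open>x \<in> {a,b,c}\<close> \<open>y \<in> {a,b,c}\<close> by blast
    have "x - y = (s - t) *\<^sub>R (b - a)" unfolding xs by (simp add: algebra_simps)
    then show "\<exists>c. x - y = c *\<^sub>R (b - a)" by blast
  qed
qed

lemma gp_cr:
  assumes "general_position P" "a \<in> P" "b \<in> P" "c \<in> P" "a \<noteq> b" "a \<noteq> c" "b \<noteq> c"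
  shows "cr a b c \<noteq> 0"
  using assms cr_zero_collinear unfolding general_position_def by blast

lemma cross_side:
  assumes "segments_cross {v,w} {c,d}" "cr v w c > 0" "cr v w d > 0"
  shows False
proof -
  obtain p where p1: "p \<in> closed_segment v w" and p2: "p \<in> closed_segment c d"
    using assms(1) unfolding segments_cross_def segment_convex_hull by blast
  from p1 obtain t where t: "p = (1 - t) *\<^sub>R v + t *\<^sub>R w" unfolding in_segment by blast
  from p2 obtain u where u: "0 \<le> u" "u \<le> 1" "p = (1 - u) *\<^sub>R c + u *\<^sub>R d" unfolding in_segment by blast
  have "cr v w p = 0" unfolding t cr_def by (simp add: algebra_simps)
  moreover have "cr v w p = (1 - u) * cr v w c + u * cr v w d" unfolding u(3) cr_def by (simp add: algebra_simps)
  moreover have "(1 - u) * cr v w c + u * cr v w d > 0"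
  proof (cases "u = 0")
    case True then show ?thesis using assms by simp
  next
    case False then have "u * cr v w d > 0" using u assms by simp
    moreover have "(1 - u) * cr v w c \<ge> 0" using u assms by simp
    ultimately show ?thesis by linarith
  qed
  ultimately show False by simp
qed

lemma cross_side':
  assumes "segments_cross {v,w} {c,d}" "cr v w c < 0" "cr v w d < 0"
  shows False
proof -
  have "segments_cross {w,v} {c,d}" using assms(1) by (simp add: insert_commute)
  moreover have "cr w v c = - cr v w c" "cr w v d = - cr v w d" unfolding cr_def by (simp_all add: algebra_simps)
  ultimately show False using cross_side[of w v c d] assms by simp
qed

lemma trans_cr:
  fixes ax ay bx by' cx cy :: real
  assumes "ax > 0 \<or> (ax = 0 \<and> ay > 0)" "bx > 0 \<or> (bx = 0 \<and> by' > 0)" "cx > 0 \<or> (cx = 0 \<and> cy > 0)"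
    "ax * by' - ay * bx > 0" "bx * cy - by' * cx > 0"
  shows "ax * cy - ay * cx > 0"
proof -
  have id: "(bx * cy - by' * cx) * ax + (cx * ay - cy * ax) * bx + (ax * by' - ay * bx) * cx = 0"
    by (simp add: algebra_simps)
  have ax: "ax > 0"
  proof (rule ccontr)
    assume "\<not> ax > 0"
    then have "ax = 0" "ay > 0" using assms(1) by auto
    moreover have "bx \<ge> 0" using assms(2) by auto
    ultimately have "ay * bx \<ge> 0" by simp
    then show False using assms(4) \<open>ax = 0\<close> by simp
  qed
  have bx: "bx > 0"
  proof (rule ccontr)
    assume "\<not> bx > 0"
    then have "bx = 0" "by' > 0" using assms(2) by auto
    moreover have "cx \<ge> 0" using assms(3) by auto
    ultimately have "by' * cx \<ge> 0" by simp
    then show False using assms(5) \<open>bx = 0\<close> by simp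
  qed
  show ?thesis
  proof (cases "cx = 0")
    case True then show ?thesis using assms(3) ax by simp
  next
    case False
    then have "cx > 0" using assms(3) by linarith
    then have "(bx * cy - by' * cx) * ax + (ax * by' - ay * bx) * cx > 0"
      using ax assms by (simp add: add_pos_pos)
    then have "(cx * ay - cy * ax) * bx < 0" using id by linarith
    then have "cx * ay - cy * ax < 0" using bx by (simp add: mult_less_0_iff)
    then show ?thesis by (simp add: algebra_simps)
  qed
qed

lemma cr_swap: "cr v w q = - cr v q w"
  unfolding cr_def by (simp add: algebra_simps)

definition mate :: "(real^2) set set \<Rightarrow> real^2 \<Rightarrow> real^2" where
  "mate M q = (SOME r. {q,r} \<in> M \<and> r \<noteq> q)"

lemma pm_edge:
  assumes "perfect_matching P M" "q \<in> P"
  shows "\<exists>r. {q,r} \<in> M \<and> r \<noteq> q"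
proof -
  have U: "\<Union>M = P" and E: "\<forall>e\<in>M. \<exists>a b. a \<noteq> b \<and> e = {a, b}"
    using assms(1) unfolding perfect_matching_def by auto
  obtain e where e: "e \<in> M" "q \<in> e" using U assms(2) by blast
  obtain a b where ab: "a \<noteq> b" "e = {a,b}" using E e(1) by blast
  show ?thesis
  proof (cases "q = a")
    case True then show ?thesis using e ab by blast
  next
    case False then have "q = b" using e ab by blast
    then have "{q,a} \<in> M" using e ab by (simp add: insert_commute)
    then show ?thesis using False by blast
  qed
qed

lemma mate:
  assumes "perfect_matching P M" "q \<in> P"
  shows "{q, mate M q} \<in> M" "mate M q \<noteq> q"
  using someI_ex[OF pm_edge[OF assms]] unfolding mate_def by blast+

lemma pm_same:
  assumes "perfect_matching P M" "e \<in> M" "e' \<in> M" "x \<in> e" "x \<in> e'"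
  shows "e = e'"
  using assms unfolding perfect_matching_def by blast

lemma pm_in:
  assumes "perfect_matching P M" "e \<in> M" "x \<in> e"
  shows "x \<in> P"
  using assms unfolding perfect_matching_def by blast

lemma mate_in: "perfect_matching P M \<Longrightarrow> q \<in> P \<Longrightarrow> mate M q \<in> P"
  using mate pm_in by blast

lemma mate_inj:
  assumes "perfect_matching P M" "q \<in> P" "q' \<in> P" "mate M q = mate M q'"
  shows "q = q'"
proof -
  have "{q, mate M q} = {q', mate M q'}"
    using pm_same[OF assms(1) mate(1)[OF assms(1,2)] mate(1)[OF assms(1,3)], of "mate M q"] assms(4) by simp
  then show ?thesis using mate(2)[OF assms(1,2)] assms(4) by (auto simp: doubleton_eq_iff)
qed

lemma mate_out:
  assumes "perfect_matching P M" "{v,w} \<in> M" "q \<in> P" "q \<notin> {v,w}"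
  shows "mate M q \<notin> {v,w}" "{q, mate M q} \<noteq> {v,w}"
proof -
  show "mate M q \<notin> {v,w}"
  proof
    assume "mate M q \<in> {v,w}"
    then have "{q, mate M q} = {v,w}" using pm_same[OF assms(1) mate(1)[OF assms(1,3)] assms(2)] by blast
    then show False using assms(4) by blast
  qed
  show "{q, mate M q} \<noteq> {v,w}" using assms(4) by blast
qed

lemma halving:
  assumes "finite P" "general_position P" "perfect_matching P M" "pairwise_crossing M"
    "{v,w} \<in> M" "v \<noteq> w"
  shows "2 * card {q\<in>P-{v,w}. cr v w q > 0} + 2 = card P"
proof -
  define L where "L = {q\<in>P-{v,w}. cr v w q > 0}"
  define R where "R = {q\<in>P-{v,w}. cr v w q < 0}"
  have vP: "v \<in> P" and wP: "w \<in> P" using pm_in[OF assms(3,5)] by auto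
  have side: "(cr v w q > 0 \<longrightarrow> cr v w (mate M q) < 0) \<and> (cr v w q < 0 \<longrightarrow> cr v w (mate M q) > 0)"
    if q: "q \<in> P - {v,w}" for q
  proof -
    let ?m = "mate M q"
    have m: "?m \<in> P - {v,w}" "?m \<noteq> q" using mate_in[OF assms(3)] mate_out[OF assms(3,5)] mate[OF assms(3)] q by auto
    have cross: "segments_cross {v,w} {q, ?m}"
      using assms(4) assms(5) mate(1)[OF assms(3)] mate_out(2)[OF assms(3,5)] q
      unfolding pairwise_crossing_def by (metis DiffD1 DiffD2)
    have "cr v w q \<noteq> 0" using gp_cr[OF assms(2) vP wP] q assms(6) by auto
    have "cr v w ?m \<noteq> 0" using gp_cr[OF assms(2) vP wP] m assms(6) by auto
    then show ?thesis using cross_side[OF cross] cross_side'[OF cross] \<open>cr v w q \<noteq> 0\<close> by (smt (verit))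
  qed
  have fin: "finite L" "finite R" using assms(1) unfolding L_def R_def by auto
  have inj: "inj_on (mate M) S" if "S \<subseteq> P" for S
    using mate_inj[OF assms(3)] that unfolding inj_on_def by blast
  have "mate M ` L \<subseteq> R"
    using side mate_in[OF assms(3)] mate_out(1)[OF assms(3,5)] unfolding L_def R_def by auto
  then have c1: "card L \<le> card R" using card_inj_on_le[OF inj _ fin(2)] unfolding L_def by auto
  have "mate M ` R \<subseteq> L"
    using side mate_in[OF assms(3)] mate_out(1)[OF assms(3,5)] unfolding L_def R_def by auto
  then have c2: "card R \<le> card L" using card_inj_on_le[OF inj _ fin(1)] unfolding R_def by auto
  have nz: "cr v w q \<noteq> 0" if "q \<in> P - {v,w}" for q
    using gp_cr[OF assms(2) vP wP] assms(6) that by blast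
  have U: "L \<union> R = P - {v,w}"
  proof
    show "L \<union> R \<subseteq> P - {v,w}" unfolding L_def R_def by blast
    show "P - {v,w} \<subseteq> L \<union> R"
    proof
      fix q assume "q \<in> P - {v,w}"
      then show "q \<in> L \<union> R" using nz[of q] unfolding L_def R_def by (auto simp: linorder_neq_iff)
    qed
  qed
  have D: "L \<inter> R = {}" unfolding L_def R_def by auto
  have "card (P - {v,w}) = card P - 2" using vP wP assms(1,6) by (simp add: card_Diff_subset)
  moreover have "card (P - {v,w}) = card L + card R" using card_Un_disjoint[OF fin D] U by simp
  moreover have "card P \<ge> 2"
  proof -
    have "{v,w} \<subseteq> P" using vP wP by blast
    then have "card {v,w} \<le> card P" using assms(1) by (rule card_mono[rotated])
    then show ?thesis using assms(6) by simp
  qed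
  ultimately show ?thesis using c1 c2 unfolding L_def by linarith
qed

lemma cr_alt: "cr v w q = (w-v)$1*(q-v)$2 - (w-v)$2*(q-v)$1"
  by (simp add: cr_def)

lemma min_unique:
  assumes "finite P" "v \<in> P"
    and vmin: "\<forall>p\<in>P. p \<noteq> v \<longrightarrow> (p$1 > v$1 \<or> (p$1 = v$1 \<and> p$2 > v$2))"
    and "w1 \<in> P" "w2 \<in> P" "w1 \<noteq> v" "w2 \<noteq> v" "cr v w1 w2 > 0"
  shows "card {q\<in>P-{v,w2}. cr v w2 q > 0} < card {q\<in>P-{v,w1}. cr v w1 q > 0}"
proof (rule psubset_card_mono)
  show "finite {q\<in>P-{v,w1}. cr v w1 q > 0}" using assms(1) by simp
  have H: "(p - v)$1 > 0 \<or> ((p - v)$1 = 0 \<and> (p - v)$2 > 0)" if "p \<in> P" "p \<noteq> v" for p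
  proof -
    have "p$1 > v$1 \<or> (p$1 = v$1 \<and> p$2 > v$2)" using vmin that by blast
    then show ?thesis by simp
  qed
  have sub: "cr v w1 q > 0" if "q \<in> P" "q \<noteq> v" "cr v w2 q > 0" for q
  proof -
    have a: "(w1-v)$1*(w2-v)$2 - (w1-v)$2*(w2-v)$1 > 0" using assms(8) unfolding cr_alt .
    have b: "(w2-v)$1*(q-v)$2 - (w2-v)$2*(q-v)$1 > 0" using that(3) unfolding cr_alt .
    have "(w1-v)$1*(q-v)$2 - (w1-v)$2*(q-v)$1 > 0"
      by (rule trans_cr[OF H[OF assms(4,6)] H[OF assms(5,7)] H[OF that(1,2)] a b])
    then show ?thesis unfolding cr_alt .
  qed
  have neg: "cr v w2 w1 < 0" using assms(8) cr_swap[of v w2 w1] by simp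
  show "{q\<in>P-{v,w2}. cr v w2 q > 0} \<subset> {q\<in>P-{v,w1}. cr v w1 q > 0}"
  proof (rule psubsetI)
    show "{q\<in>P-{v,w2}. cr v w2 q > 0} \<subseteq> {q\<in>P-{v,w1}. cr v w1 q > 0}"
    proof
      fix q assume "q \<in> {q\<in>P-{v,w2}. cr v w2 q > 0}"
      then have q: "q \<in> P" "q \<noteq> v" "q \<noteq> w2" "cr v w2 q > 0" by auto
      have "q \<noteq> w1" using q(4) neg by auto
      then show "q \<in> {q\<in>P-{v,w1}. cr v w1 q > 0}" using q sub[OF q(1,2,4)] by simp
    qed
    have "w2 \<in> {q\<in>P-{v,w1}. cr v w1 q > 0}" using assms(5,7,8) neg by auto
    moreover have "w2 \<notin> {q\<in>P-{v,w2}. cr v w2 q > 0}" by simp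
    ultimately show "{q\<in>P-{v,w2}. cr v w2 q > 0} \<noteq> {q\<in>P-{v,w1}. cr v w1 q > 0}" by blast
  qed
qed

lemma gp_subset:
  assumes "general_position P" "Q \<subseteq> P" shows "general_position Q"
  unfolding general_position_def
proof (intro ballI impI)
  fix a b c assume "a \<in> Q" "b \<in> Q" "c \<in> Q" "a \<noteq> b \<and> a \<noteq> c \<and> b \<noteq> c"
  moreover have "\<forall>a\<in>P. \<forall>b\<in>P. \<forall>c\<in>P. a \<noteq> b \<and> a \<noteq> c \<and> b \<noteq> c \<longrightarrow> \<not> collinear {a, b, c}"
    using assms(1) unfolding general_position_def .
  ultimately show "\<not> collinear {a, b, c}" using assms(2) by (meson subsetD)
qed

lemma pc_subset:
  assumes "pairwise_crossing M" "N \<subseteq> M" shows "pairwise_crossing N"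
  unfolding pairwise_crossing_def
proof (intro ballI impI)
  fix e e' assume "e \<in> N" "e' \<in> N" "e \<noteq> e'"
  moreover have "\<forall>e\<in>M. \<forall>e'\<in>M. e \<noteq> e' \<longrightarrow> segments_cross e e'"
    using assms(1) unfolding pairwise_crossing_def .
  ultimately show "segments_cross e e'" using assms(2) by (meson subsetD)
qed

lemma pmE:
  assumes "perfect_matching P M"
  shows "\<forall>e\<in>M. \<exists>a b. a \<noteq> b \<and> e = {a, b}" "\<Union>M = P"
    "\<forall>e\<in>M. \<forall>e'\<in>M. e \<noteq> e' \<longrightarrow> e \<inter> e' = {}"
    apply (rule assms[unfolded perfect_matching_def, THEN conjunct1])
   apply (rule assms[unfolded perfect_matching_def, THEN conjunct2, THEN conjunct1])
  apply (rule assms[unfolded perfect_matching_def, THEN conjunct2, THEN conjunct2])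
  done

lemma pm_remove:
  assumes "perfect_matching P M" "{v,w} \<in> M"
  shows "perfect_matching (P - {v,w}) (M - {{v,w}})"
proof -
  note E = pmE(1)[OF assms(1)] and U = pmE(2)[OF assms(1)] and D = pmE(3)[OF assms(1)]
  have "\<Union>(M - {{v,w}}) = P - {v,w}"
  proof
    show "\<Union>(M - {{v,w}}) \<subseteq> P - {v,w}"
    proof
      fix x assume "x \<in> \<Union>(M - {{v,w}})"
      then obtain e where e: "e \<in> M" "e \<noteq> {v,w}" "x \<in> e" by blast
      have "x \<in> \<Union>M" using e by blast
      then have "x \<in> P" using U by simp
      moreover have "x \<notin> {v,w}"
      proof
        assume "x \<in> {v,w}"
        then have "e \<inter> {v,w} \<noteq> {}" using e(3) by blast
        moreover have "e \<inter> {v,w} = {}" using D e(1,2) assms(2) by simp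
        ultimately show False by simp
      qed
      ultimately show "x \<in> P - {v,w}" by blast
    qed
    show "P - {v,w} \<subseteq> \<Union>(M - {{v,w}})"
    proof
      fix x assume x: "x \<in> P - {v,w}"
      then have "x \<in> \<Union>M" using U by simp
      then obtain e where e: "e \<in> M" "x \<in> e" by blast
      have "e \<noteq> {v,w}" using x e(2) by blast
      then show "x \<in> \<Union>(M - {{v,w}})" using e by blast
    qed
  qed
  moreover have "\<forall>e\<in>M - {{v,w}}. \<exists>a b. a \<noteq> b \<and> e = {a, b}" using E by blast
  moreover have "\<forall>e\<in>M - {{v,w}}. \<forall>e'\<in>M - {{v,w}}. e \<noteq> e' \<longrightarrow> e \<inter> e' = {}" using D by blast
  ultimately show ?thesis unfolding perfect_matching_def by (intro conjI) assumption+
qed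

lemma pm_empty:
  assumes "perfect_matching {} M" shows "M = {}"
proof (rule ccontr)
  assume "M \<noteq> {}"
  then obtain e where e: "e \<in> M" by blast
  note E = pmE(1)[OF assms] and U = pmE(2)[OF assms]
  obtain a b where "e = {a,b}" using E e by blast
  then have "a \<in> \<Union>M" using e by blast
  then show False using U by simp
qed

lemma lexmin:
  fixes P :: "(real^2) set"
  assumes "finite P" "P \<noteq> {}"
  obtains v where "v \<in> P" "\<forall>p\<in>P. p \<noteq> v \<longrightarrow> (p$1 > v$1 \<or> (p$1 = v$1 \<and> p$2 > v$2))"
proof -
  define x0 where "x0 = Min ((\<lambda>p. p$1) ` P)"
  define S where "S = {p\<in>P. p$1 = x0}"
  have "x0 \<in> (\<lambda>p. p$1) ` P" unfolding x0_def using assms by simp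
  then have Sne: "S \<noteq> {}" unfolding S_def by auto
  have Sfin: "finite S" using assms(1) unfolding S_def by simp
  define y0 where "y0 = Min ((\<lambda>p. p$2) ` S)"
  have "y0 \<in> (\<lambda>p. p$2) ` S" unfolding y0_def using Sne Sfin by simp
  then obtain v where v: "v \<in> S" "v$2 = y0" by auto
  have x0le: "x0 \<le> p$1" if "p \<in> P" for p unfolding x0_def using assms(1) that by simp
  have y0le: "y0 \<le> p$2" if "p \<in> S" for p unfolding y0_def using Sfin that by simp
  show ?thesis
  proof (rule that)
    show "v \<in> P" using v unfolding S_def by simp
    show "\<forall>p\<in>P. p \<noteq> v \<longrightarrow> (p$1 > v$1 \<or> (p$1 = v$1 \<and> p$2 > v$2))"
    proof (intro ballI impI)
      fix p assume p: "p \<in> P" "p \<noteq> v"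
      have v1: "v$1 = x0" using v unfolding S_def by simp
      show "p$1 > v$1 \<or> (p$1 = v$1 \<and> p$2 > v$2)"
      proof (cases "p$1 = x0")
        case True
        then have "p \<in> S" using p unfolding S_def by simp
        then have "p$2 \<ge> v$2" using y0le v by simp
        moreover have "p$2 \<noteq> v$2"
        proof
          assume "p$2 = v$2"
          then have "p = v" unfolding vec2_eq using True v1 by simp
          then show False using p(2) by simp
        qed
        ultimately show ?thesis using True v1 by simp
      next
        case False then show ?thesis using x0le[OF p(1)] v1 by simp
      qed
    qed
  qed
qed

lemma main:
  "finite P \<Longrightarrow> general_position P \<Longrightarrow> perfect_matching P M1 \<Longrightarrow> pairwise_crossing M1
   \<Longrightarrow> perfect_matching P M2 \<Longrightarrow> pairwise_crossing M2 \<Longrightarrow> M1 = M2"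
proof (induction "card P" arbitrary: P M1 M2 rule: less_induct)
  case less
  show ?case
  proof (cases "P = {}")
    case True
    then have "M1 = {}" "M2 = {}" using pm_empty less.prems(3,5) by auto
    then show ?thesis by simp
  next
    case False
    obtain v where v: "v \<in> P" and vmin: "\<forall>p\<in>P. p \<noteq> v \<longrightarrow> (p$1 > v$1 \<or> (p$1 = v$1 \<and> p$2 > v$2))"
      using lexmin[OF less.prems(1) False] by blast
    define w1 where "w1 = mate M1 v"
    define w2 where "w2 = mate M2 v"
    have e1: "{v,w1} \<in> M1" "w1 \<noteq> v" "w1 \<in> P" using mate[OF less.prems(3) v] mate_in[OF less.prems(3) v] unfolding w1_def by auto
    have e2: "{v,w2} \<in> M2" "w2 \<noteq> v" "w2 \<in> P" using mate[OF less.prems(5) v] mate_in[OF less.prems(5) v] unfolding w2_def by auto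
    have h1: "2 * card {q\<in>P-{v,w1}. cr v w1 q > 0} + 2 = card P"
      using halving[OF less.prems(1,2,3,4) e1(1)] e1(2) by simp
    have h2: "2 * card {q\<in>P-{v,w2}. cr v w2 q > 0} + 2 = card P"
      using halving[OF less.prems(1,2,5,6) e2(1)] e2(2) by simp
    have weq: "w1 = w2"
    proof (rule ccontr)
      assume ne: "w1 \<noteq> w2"
      then have "cr v w1 w2 \<noteq> 0" using gp_cr[OF less.prems(2) v e1(3) e2(3)] e1(2) e2(2) by auto
      then consider "cr v w1 w2 > 0" | "cr v w2 w1 > 0" using cr_swap[of v w1 w2] by linarith
      then show False
      proof cases
        case 1
        show False using min_unique[OF less.prems(1) v vmin e1(3) e2(3) e1(2) e2(2) 1] h1 h2 by linarith
      next
        case 2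
        show False using min_unique[OF less.prems(1) v vmin e2(3) e1(3) e2(2) e1(2) 2] h1 h2 by linarith
      qed
    qed
    define w where "w = w1"
    have ew1: "{v,w} \<in> M1" and ew2: "{v,w} \<in> M2" using e1 e2 weq unfolding w_def by auto
    have lt: "card (P - {v,w}) < card P" using v less.prems(1) by (intro psubset_card_mono) auto
    have fin: "finite (P - {v,w})" using less.prems(1) by simp
    have gp: "general_position (P - {v,w})" using gp_subset[OF less.prems(2)] by blast
    have pm1: "perfect_matching (P - {v,w}) (M1 - {{v,w}})" by (rule pm_remove[OF less.prems(3) ew1])
    have pm2: "perfect_matching (P - {v,w}) (M2 - {{v,w}})" by (rule pm_remove[OF less.prems(5) ew2])
    have pc1: "pairwise_crossing (M1 - {{v,w}})" using pc_subset[OF less.prems(4)] by blast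
    have pc2: "pairwise_crossing (M2 - {{v,w}})" using pc_subset[OF less.prems(6)] by blast
    have eq: "M1 - {{v,w}} = M2 - {{v,w}}" by (rule less.hyps[OF lt fin gp pm1 pc1 pm2 pc2])
    have "M1 = insert {v,w} (M1 - {{v,w}})" using ew1 by blast
    also have "\<dots> = insert {v,w} (M2 - {{v,w}})" using eq by simp
    also have "\<dots> = M2" using ew2 by blast
    finally show ?thesis .
  qed
qed

theorem theorem8:
  fixes P :: "(real^2) set"
  assumes "finite P" and "general_position P" and "even (card P)"
    and "perfect_matching P M1" and "pairwise_crossing M1"
    and "perfect_matching P M2" and "pairwise_crossing M2"
  shows "M1 = M2"
  using main[OF assms(1,2,4,5,6,7)] .

end
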